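(* Let $f(x)=\frac{1}{\sqrt{2\pi}}\ln(1+x)$ for $x\ge0$, let $d>0$, let $u(x)=\frac1d(e+x)\big(\ln(e+x)\big)^2$, and let $g(x)=u(f(x))-f(x)$. Then: 1. If $0<d\le1$, then $g\ge f$ and $g$ is increasing on $[0,\infty)$. 2. $\int_0^\infty\frac{f'(x)}{f(x)+g(x)}\,dx=d$. *)

theory Defs
  imports "HOL-Analysis.Analysis"
begin

definition f7 :: "real \<Rightarrow> real" where
  "f7 x = ln (1 + x) / sqrt (2 * pi)"

definition u7 :: "real \<Rightarrow> real \<Rightarrow> real" where
  "u7 d x = (1 / d) * (exp 1 + x) * (ln (exp 1 + x))\<^sup>2"

definition g7 :: "real \<Rightarrow> real \<Rightarrow> real" where
  "g7 d x = u7 d (f7 x) - f7 x"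

end

theory Submission
  imports Defs
begin

lemma f7_nonneg: "x \<ge> 0 \<Longrightarrow> f7 x \<ge> 0"
  unfolding f7_def by simp

lemma f7_mono: "0 \<le> x \<Longrightarrow> x \<le> y \<Longrightarrow> f7 x \<le> f7 y"
  unfolding f7_def by (intro divide_right_mono) auto

lemma f7_deriv: "x > -1 \<Longrightarrow> (f7 has_real_derivative 1 / (1 + x) / sqrt (2 * pi)) (at x)"
proof -
  assume x: "x > -1"
  have "((\<lambda>x. ln (1 + x)) has_real_derivative 1 / (1 + x)) (at x)"
    using x by (auto intro!: derivative_eq_intros)
  note dl = this
  have eq: "f7 = (\<lambda>x. ln (1 + x) / sqrt (2 * pi))" by (rule ext) (simp add: f7_def)
  show ?thesis unfolding eq by (rule DERIV_cdivide[OF dl])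
qed

lemma ln_ge1: "(y::real) \<ge> 0 \<Longrightarrow> ln (exp 1 + y) \<ge> 1"
  by (metis add_0_right add_le_cancel_left exp_gt_zero ln_exp ln_le_cancel_iff add_pos_nonneg)

lemma ln_bound: "(y::real) \<ge> 0 \<Longrightarrow> ln (exp 1 + y) \<ge> 1 + y / (exp 1 + y)"
proof -
  assume y: "y \<ge> 0"
  have e: "exp 1 > (0::real)" by simp
  have p: "exp 1 + y > 0" using e y by linarith
  have q: "exp 1 / (exp 1 + y) > 0" using e p by simp
  have "ln (exp 1 / (exp 1 + y)) \<le> exp 1 / (exp 1 + y) - 1"
    by (rule ln_le_minus_one[OF q])
  moreover have "ln (exp 1 / (exp 1 + y)) = 1 - ln (exp 1 + y)"
    using e p by (simp add: ln_div)
  moreover have "exp 1 / (exp 1 + y) - 1 = - (y / (exp 1 + y))"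
    using p by (simp add: field_simps)
  ultimately show ?thesis by linarith
qed

lemma sum7: "f7 x + g7 d x = u7 d (f7 x)"
  by (simp add: g7_def)

lemma u7_pos: "d > 0 \<Longrightarrow> y \<ge> 0 \<Longrightarrow> u7 d y > 0"
proof -
  assume "d > 0" "y \<ge> 0"
  moreover have "ln (exp 1 + y) \<ge> 1" using ln_ge1 \<open>y \<ge> 0\<close> by blast
  moreover have "exp 1 + y > 0" using \<open>y \<ge> 0\<close> by (smt (verit) exp_gt_zero)
  ultimately show ?thesis unfolding u7_def
    by (intro mult_pos_pos) (auto intro!: divide_pos_pos)
qed

lemma part_ge: assumes "d > 0" "d \<le> 1" "y \<ge> 0" shows "u7 d y \<ge> 2 * y"
proof -
  define L where "L = ln (exp 1 + y)"
  have L1: "L \<ge> 1" using ln_ge1 assms(3) L_def by blast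
  have Lb: "L \<ge> 1 + y / (exp 1 + y)" using ln_bound assms(3) L_def by blast
  have ep: "exp 1 + y > 0" using assms(3) by (smt (verit) exp_gt_zero)
  have "(exp 1 + y) * L \<ge> (exp 1 + y) * (1 + y / (exp 1 + y))"
    using Lb ep by (intro mult_left_mono) auto
  also have "(exp 1 + y) * (1 + y / (exp 1 + y)) = exp 1 + 2 * y" using ep by (simp add: field_simps)
  finally have a: "(exp 1 + y) * L \<ge> exp 1 + 2 * y" .
  have "(exp 1 + y) * L\<^sup>2 \<ge> (exp 1 + y) * L"
    using L1 ep by (simp add: power2_eq_square)
  moreover have "(1 / d) * ((exp 1 + y) * L\<^sup>2) \<ge> (exp 1 + y) * L\<^sup>2"
  proof -
    have "1 / d \<ge> 1" using assms by simp
    moreover have "(exp 1 + y) * L\<^sup>2 \<ge> 0" using ep by simp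
    ultimately show ?thesis using mult_right_mono[of 1 "1/d"] by simp
  qed
  ultimately have "u7 d y \<ge> exp 1 + 2 * y" using a unfolding u7_def L_def by (simp add: mult.assoc)
  then show ?thesis by (smt (verit) exp_gt_zero)
qed

lemma part_mono: assumes "d > 0" "d \<le> 1" "0 \<le> a" "a \<le> b" shows "u7 d a - a \<le> u7 d b - b"
proof -
  define La where "La = ln (exp 1 + a)"
  define Lb where "Lb = ln (exp 1 + b)"
  have L1: "La \<ge> 1" using ln_ge1 assms(3) La_def by blast
  have ea: "exp 1 + a > 0" using assms(3) by (smt (verit) exp_gt_zero)
  have "La \<le> Lb" unfolding La_def Lb_def using ea assms by simp
  then have "La\<^sup>2 \<le> Lb\<^sup>2" using L1 by (intro power_mono) auto
  then have "(exp 1 + b) * La\<^sup>2 \<le> (exp 1 + b) * Lb\<^sup>2" using ea assms by (intro mult_left_mono) auto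
  moreover have "La\<^sup>2 \<ge> 1" using L1 by (simp add: one_le_power)
  then have "(b - a) * La\<^sup>2 \<ge> (b - a) * 1" using assms by (intro mult_left_mono) auto
  ultimately have D: "(exp 1 + b) * Lb\<^sup>2 - (exp 1 + a) * La\<^sup>2 \<ge> b - a"
    by (simp add: algebra_simps)
  then have D0: "(exp 1 + b) * Lb\<^sup>2 - (exp 1 + a) * La\<^sup>2 \<ge> 0" using assms by simp
  have "1 / d \<ge> 1" using assms by simp
  then have "(1/d) * ((exp 1 + b) * Lb\<^sup>2 - (exp 1 + a) * La\<^sup>2) \<ge> (exp 1 + b) * Lb\<^sup>2 - (exp 1 + a) * La\<^sup>2"
    using mult_right_mono[OF \<open>1 / d \<ge> 1\<close> D0] by simp
  then show ?thesis using D unfolding u7_def La_def Lb_def by (simp add: algebra_simps)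
qed

lemma alg: "(d::real) > 0 \<Longrightarrow> A > 0 \<Longrightarrow> L > 0 \<Longrightarrow>
  - d * (- ((inverse A * (0 + D)) * inverse (L\<^sup>2))) = D / ((1 / d) * A * L\<^sup>2)"
  by (simp add: field_simps)

definition F7 :: "real \<Rightarrow> real \<Rightarrow> real" where
  "F7 d x = - d * inverse (ln (exp 1 + f7 x))"

lemma F7_deriv:
  assumes "d > 0" "x \<ge> 0"
  shows "(F7 d has_real_derivative deriv f7 x / (f7 x + g7 d x)) (at x)"
proof -
  define D where "D = 1 / (1 + x) / sqrt (2 * pi)"
  have fd: "(f7 has_real_derivative D) (at x)" unfolding D_def using assms by (intro f7_deriv) auto
  have dd: "deriv f7 x = D" using fd by (rule DERIV_imp_deriv)
  have fx: "f7 x \<ge> 0" using assms f7_nonneg by blast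
  have ep: "exp 1 + f7 x > 0" using fx by (smt (verit) exp_gt_zero)
  have L1: "ln (exp 1 + f7 x) \<ge> 1" using ln_ge1 fx by blast
  have g: "((\<lambda>x. exp 1 + f7 x) has_real_derivative 0 + D) (at x)"
    by (intro DERIV_add DERIV_const fd)
  have h: "((\<lambda>x. ln (exp 1 + f7 x)) has_real_derivative inverse (exp 1 + f7 x) * (0 + D)) (at x)"
    by (rule DERIV_chain2[OF DERIV_ln[OF ep] g])
  have i: "((\<lambda>x. inverse (ln (exp 1 + f7 x))) has_real_derivative
      - ((inverse (exp 1 + f7 x) * (0 + D)) * inverse ((ln (exp 1 + f7 x))\<^sup>2))) (at x)"
    using DERIV_inverse_fun[OF h] L1 by (simp add: power2_eq_square)
  have j: "(F7 d has_real_derivative - d * (- ((inverse (exp 1 + f7 x) * (0 + D)) * inverse ((ln (exp 1 + f7 x))\<^sup>2)))) (at x)"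
    unfolding F7_def[abs_def] by (rule DERIV_cmult[OF i])
  have L0: "ln (exp 1 + f7 x) > 0" using L1 by linarith
  have eqq: "- d * (- ((inverse (exp 1 + f7 x) * (0 + D)) * inverse ((ln (exp 1 + f7 x))\<^sup>2)))
      = deriv f7 x / (f7 x + g7 d x)"
    unfolding dd sum7 u7_def by (rule alg[OF assms(1) ep L0])
  show ?thesis using j unfolding eqq .
qed

lemma integrand_nonneg: "d > 0 \<Longrightarrow> x \<ge> 0 \<Longrightarrow> deriv f7 x / (f7 x + g7 d x) \<ge> 0"
proof -
  assume a: "d > 0" "x \<ge> 0"
  have "deriv f7 x = 1 / (1 + x) / sqrt (2 * pi)" using a by (intro DERIV_imp_deriv f7_deriv) auto
  moreover have "u7 d (f7 x) > 0" using a by (intro u7_pos f7_nonneg) auto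
  ultimately show ?thesis using a by (simp add: sum7)
qed

lemma F7_lim: "((\<lambda>k::nat. F7 d (real k)) \<longlonglongrightarrow> 0)"
proof -
  have c: "sqrt (2 * pi) > 0" by simp
  have a: "filterlim (\<lambda>k::nat. 1 + real k) at_top sequentially"
    by (intro filterlim_tendsto_add_at_top[OF tendsto_const] filterlim_real_sequentially)
  have b: "filterlim (\<lambda>k::nat. ln (1 + real k)) at_top sequentially"
    by (rule filterlim_compose[OF ln_at_top a])
  have "filterlim (\<lambda>k::nat. inverse (sqrt (2 * pi)) * ln (1 + real k)) at_top sequentially"
    by (rule filterlim_tendsto_pos_mult_at_top[OF tendsto_const _ b]) (use c in simp)
  then have "filterlim (\<lambda>k::nat. f7 (real k)) at_top sequentially"
    unfolding f7_def by (simp add: divide_inverse mult.commute)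
  then have "filterlim (\<lambda>k::nat. exp 1 + f7 (real k)) at_top sequentially"
    by (intro filterlim_tendsto_add_at_top[OF tendsto_const])
  then have "filterlim (\<lambda>k::nat. ln (exp 1 + f7 (real k))) at_top sequentially"
    by (rule filterlim_compose[OF ln_at_top])
  then have "((\<lambda>k::nat. inverse (ln (exp 1 + f7 (real k)))) \<longlongrightarrow> 0) sequentially"
    by (rule tendsto_inverse_0_at_top)
  then have "((\<lambda>k::nat. - d * inverse (ln (exp 1 + f7 (real k)))) \<longlongrightarrow> - d * 0) sequentially"
    by (intro tendsto_mult tendsto_const)
  then show ?thesis unfolding F7_def by simp
qed

theorem lemma7:
  fixes d :: real
  assumes "d > 0"
  shows "(d \<le> 1 \<longrightarrow> (\<forall>x\<ge>0. g7 d x \<ge> f7 x) \<and> mono_on {0..} (g7 d))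
         \<and> ((\<lambda>x. deriv f7 x / (f7 x + g7 d x)) has_integral d) {0..}"
proof (intro conjI impI)
  assume d1: "d \<le> 1"
  show "\<forall>x\<ge>0. g7 d x \<ge> f7 x"
  proof (intro allI impI)
    fix x :: real assume "x \<ge> 0"
    then have "u7 d (f7 x) \<ge> 2 * f7 x" using assms d1 by (intro part_ge f7_nonneg) auto
    then show "g7 d x \<ge> f7 x" unfolding g7_def by simp
  qed
  show "mono_on {0..} (g7 d)"
  proof (rule mono_onI)
    fix x y :: real assume "x \<in> {0..}" "y \<in> {0..}" "x \<le> y"
    then have "u7 d (f7 x) - f7 x \<le> u7 d (f7 y) - f7 y"
      using assms d1 by (intro part_mono f7_nonneg f7_mono) auto
    then show "g7 d x \<le> g7 d y" unfolding g7_def by simp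
  qed
next
  define h where "h = (\<lambda>x. deriv f7 x / (f7 x + g7 d x))"
  define fk where "fk = (\<lambda>(k::nat) x. if x \<in> {0..real k} then h x else 0)"
  have I: "(fk k has_integral (F7 d (real k) - F7 d 0)) {0..}" for k
  proof -
    have "(h has_integral (F7 d (real k) - F7 d 0)) {0..real k}"
    proof (rule fundamental_theorem_of_calculus)
      fix x assume "x \<in> {0..real k}"
      then have "(F7 d has_real_derivative h x) (at x)" unfolding h_def using assms
        by (intro F7_deriv) auto
      then have "(F7 d has_vector_derivative h x) (at x)"
        unfolding has_real_derivative_iff_has_vector_derivative .
      then show "(F7 d has_vector_derivative h x) (at x within {0..real k})"
        by (rule has_vector_derivative_at_within)
    qed (rule of_nat_0_le_iff)
    note hi = this
    have sub: "{0..real k} \<subseteq> {0::real..}" by auto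
    show ?thesis unfolding fk_def has_integral_restrict[OF sub] by (rule hi)
  qed
  have "(h has_integral (0 - F7 d 0)) {0..}"
  proof (rule has_integral_monotone_convergence_increasing[OF I])
    fix k :: nat and x :: real assume "x \<in> {0..}"
    then have h0: "0 \<le> h x" unfolding h_def using integrand_nonneg[OF assms, of x] by simp
    show "fk k x \<le> fk (Suc k) x" unfolding fk_def
      using h0 by (simp add: of_nat_Suc)
  next
    fix x :: real assume "x \<in> {0..}"
    have "eventually (\<lambda>k. fk k x = h x) sequentially"
      unfolding eventually_sequentially
    proof (intro exI allI impI)
      fix k assume "k \<ge> nat \<lceil>x\<rceil>"
      then have "real k \<ge> x" by linarith
      then show "fk k x = h x" using \<open>x \<in> {0..}\<close> unfolding fk_def by simp
    qed
    then have "((\<lambda>k. fk k x) \<longlonglongrightarrow> h x) = ((\<lambda>k. h x) \<longlonglongrightarrow> h x)"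
      by (rule tendsto_cong)
    then show "(\<lambda>k. fk k x) \<longlonglongrightarrow> h x" by simp
  next
    show "(\<lambda>k. F7 d (real k) - F7 d 0) \<longlonglongrightarrow> 0 - F7 d 0"
      by (intro tendsto_diff F7_lim tendsto_const)
  qed
  moreover have "F7 d 0 = - d" unfolding F7_def f7_def by simp
  ultimately have "(h has_integral d) {0..}" by simp
  then show "((\<lambda>x. deriv f7 x / (f7 x + g7 d x)) has_integral d) {0..}"
    unfolding h_def .
qed

end
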